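(* Every Lindelöf space is selectively star-ccc. More generally, for each $k\in\mathbb{N}^+$, every $k$-star-Lindelöf space is selectively $(k+1)$-star-ccc.
   Context: No separation axioms are assumed; $\mathbb{N}^+$ is the set of positive integers. For $B\subseteq X$ and a family $\mathcal{U}$ of subsets of $X$: $\operatorname{st}^1(B,\mathcal{U})=\bigcup\{U\in\mathcal{U}:U\cap B\neq\emptyset\}$ and $\operatorname{st}^{n+1}(B,\mathcal{U})=\bigcup\{U\in\mathcal{U}:U\cap\operatorname{st}^n(B,\mathcal{U})\neq\emptyset\}$. A space $X$ is $k$-star-Lindelöf if for every open cover $\mathcal{U}$ there is a countable $\mathcal{V}\subseteq\mathcal{U}$ with $\operatorname{st}^k(\bigcup\mathcal{V},\mathcal{U})=X$. A space $X$ is selectively $k$-star-ccc if for every open cover $\mathcal{U}$ of $X$ and every sequence $(\mathcal{A}_n:n\in\omega)$ of maximal pairwise disjoint families of open subsets of $X$, there is a sequence $(A_n\in\mathcal{A}_n:n\in\omega)$ with $\operatorname{st}^k(\bigcup_{n\in\omega}A_n,\mathcal{U})=X$; selectively star-ccc means selectively $1$-star-ccc. *)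

theory Defs
  imports "HOL-Analysis.Analysis"
begin

text \<open>Iterated star. By convention st 0 B U = B, so that st 1 B U is the usual star
  of B with respect to U and st (n+1) B U = union of members of U meeting st n B U.\<close>
primrec st :: "nat \<Rightarrow> 'a set \<Rightarrow> 'a set set \<Rightarrow> 'a set" where
  "st 0 B \<U> = B"
| "st (Suc n) B \<U> = \<Union>{U \<in> \<U>. U \<inter> st n B \<U> \<noteq> {}}"

definition open_cover :: "'a topology \<Rightarrow> 'a set set \<Rightarrow> bool" where
  "open_cover X \<U> \<longleftrightarrow> (\<forall>U\<in>\<U>. openin X U) \<and> \<Union>\<U> = topspace X"

definition k_star_Lindelof :: "nat \<Rightarrow> 'a topology \<Rightarrow> bool" where
  "k_star_Lindelof k X \<longleftrightarrow>
     (\<forall>\<U>. open_cover X \<U> \<longrightarrow>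
        (\<exists>\<V>. \<V> \<subseteq> \<U> \<and> countable \<V> \<and> st k (\<Union>\<V>) \<U> = topspace X))"

definition disjoint_open_family :: "'a topology \<Rightarrow> 'a set set \<Rightarrow> bool" where
  "disjoint_open_family X \<A> \<longleftrightarrow> (\<forall>A\<in>\<A>. openin X A) \<and> pairwise disjnt \<A>"

definition maximal_disjoint_open_family :: "'a topology \<Rightarrow> 'a set set \<Rightarrow> bool" where
  "maximal_disjoint_open_family X \<A> \<longleftrightarrow>
     disjoint_open_family X \<A> \<and>
     (\<forall>\<B>. disjoint_open_family X \<B> \<and> \<A> \<subseteq> \<B> \<longrightarrow> \<B> = \<A>)"

definition selectively_k_star_ccc :: "nat \<Rightarrow> 'a topology \<Rightarrow> bool" where
  "selectively_k_star_ccc k X \<longleftrightarrow>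
     (\<forall>\<U> \<A>s. open_cover X \<U> \<and> (\<forall>n::nat. maximal_disjoint_open_family X (\<A>s n)) \<longrightarrow>
        (\<exists>A. (\<forall>n. A n \<in> \<A>s n) \<and> st k (\<Union>n. A n) \<U> = topspace X))"

definition selectively_star_ccc :: "'a topology \<Rightarrow> bool" where
  "selectively_star_ccc X \<longleftrightarrow> selectively_k_star_ccc 1 X"

end

theory Submission
  imports Defs
begin

lemma st_mono: "B \<subseteq> C \<Longrightarrow> st n B U \<subseteq> st n C U"
  by (induction n) auto

lemma st_Suc_inner: "st (Suc n) B U = st n (st 1 B U) U"
proof (induction n)
  case 0
  then show ?case by simp
next
  case (Suc n)
  have "st (Suc (Suc n)) B U = \<Union>{V \<in> U. V \<inter> st (Suc n) B U \<noteq> {}}" by simp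
  also have "\<dots> = st (Suc n) (st 1 B U) U" using Suc.IH by simp
  finally show ?case .
qed

lemma st_sub_top: "open_cover X U \<Longrightarrow> st (Suc n) B U \<subseteq> topspace X"
  unfolding open_cover_def by auto

lemma empty_in_max: "maximal_disjoint_open_family X A \<Longrightarrow> {} \<in> A"
proof -
  assume m: "maximal_disjoint_open_family X A"
  have "disjoint_open_family X (insert {} A)"
    using m unfolding maximal_disjoint_open_family_def disjoint_open_family_def pairwise_def
    by (auto simp: disjnt_def)
  then have "insert {} A = A" using m unfolding maximal_disjoint_open_family_def by blast
  then show ?thesis by blast
qed

lemma meets_max:
  assumes m: "maximal_disjoint_open_family X A" and o: "openin X V" and ne: "V \<noteq> {}"
  shows "\<exists>a\<in>A. a \<inter> V \<noteq> {}"
proof (rule ccontr)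
  assume "\<not> ?thesis"
  then have d: "\<forall>a\<in>A. a \<inter> V = {}" by blast
  then have "V \<notin> A" using ne by blast
  have "disjoint_open_family X (insert V A)"
    using m o d unfolding maximal_disjoint_open_family_def disjoint_open_family_def pairwise_def
    by (auto simp: disjnt_def)
  then have "insert V A = A" using m unfolding maximal_disjoint_open_family_def by blast
  with \<open>V \<notin> A\<close> show False by blast
qed

lemma select:
  fixes As :: "nat \<Rightarrow> 'a set set"
  assumes oc: "open_cover X U" and m: "\<And>n. maximal_disjoint_open_family X (As n)"
    and VU: "V \<subseteq> U" and cV: "countable V"
  shows "\<exists>A. (\<forall>n. A n \<in> As n) \<and> \<Union>V \<subseteq> st 1 (\<Union>n. A n) U"
proof (cases "V = {}")
  case True
  then show ?thesis using empty_in_max[OF m] by (intro exI[of _ "\<lambda>n. {}"]) auto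
next
  case False
  define f where "f = from_nat_into V"
  have rf: "range f = V" using False cV unfolding f_def by (simp add: range_from_nat_into)
  define A where "A n = (if f n = {} then {} else (SOME a. a \<in> As n \<and> a \<inter> f n \<noteq> {}))" for n
  have fo: "openin X (f n)" for n using rf VU oc unfolding open_cover_def by blast
  have A1: "A n \<in> As n \<and> (f n \<noteq> {} \<longrightarrow> A n \<inter> f n \<noteq> {})" for n
  proof (cases "f n = {}")
    case True
    then show ?thesis using empty_in_max[OF m] unfolding A_def by simp
  next
    case False
    then have "\<exists>a. a \<in> As n \<and> a \<inter> f n \<noteq> {}" using meets_max[OF m fo] by blast
    then have "(SOME a. a \<in> As n \<and> a \<inter> f n \<noteq> {}) \<in> As n \<and> (SOME a. a \<in> As n \<and> a \<inter> f n \<noteq> {}) \<inter> f n \<noteq> {}"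
      by (rule someI_ex)
    then show ?thesis unfolding A_def using False by simp
  qed
  have "\<Union>V \<subseteq> st 1 (\<Union>n. A n) U"
  proof
    fix x assume "x \<in> \<Union>V"
    then obtain n where x: "x \<in> f n" using rf by blast
    then have "A n \<inter> f n \<noteq> {}" using A1 by blast
    moreover have "f n \<in> U" using rf VU by blast
    ultimately show "x \<in> st 1 (\<Union>n. A n) U" using x by auto
  qed
  moreover have "\<forall>n. A n \<in> As n" using A1 by blast
  ultimately show ?thesis by blast
qed

lemma main:
  assumes H: "\<And>U. open_cover X U \<Longrightarrow> \<exists>V. V \<subseteq> U \<and> countable V \<and> st k (\<Union>V) U = topspace X"
  shows "selectively_k_star_ccc (k + 1) X"
  unfolding selectively_k_star_ccc_def
proof (intro allI impI, elim conjE)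
  fix U and As :: "nat \<Rightarrow> 'a set set" assume oc: "open_cover X U" and m: "\<forall>n. maximal_disjoint_open_family X (As n)"
  from H[OF oc] obtain V where V1: "V \<subseteq> U" and V2: "countable V" and V3: "st k (\<Union>V) U = topspace X"
    by (elim exE conjE)
  have m': "maximal_disjoint_open_family X (As n)" for n using m by (rule spec)
  have "\<exists>A. (\<forall>n. A n \<in> As n) \<and> \<Union>V \<subseteq> st 1 (\<Union>n. A n) U"
    by (rule select[where As=As, OF oc m' V1 V2])
  then obtain A where A1: "\<forall>n. A n \<in> As n" and A2: "\<Union>V \<subseteq> st 1 (\<Union>n. A n) U"
    by (elim exE conjE)
  have s1: "st k (\<Union>V) U \<subseteq> st k (st 1 (\<Union>n. A n) U) U" by (rule st_mono[OF A2])
  have s2: "st (Suc k) (\<Union>n. A n) U = st k (st 1 (\<Union>n. A n) U) U" by (rule st_Suc_inner)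
  have s3: "st (Suc k) (\<Union>n. A n) U \<subseteq> topspace X" by (rule st_sub_top[OF oc])
  have "st (Suc k) (\<Union>n. A n) U = topspace X"
  proof (rule subset_antisym)
    show "st (Suc k) (\<Union>n. A n) U \<subseteq> topspace X" by (rule s3)
    show "topspace X \<subseteq> st (Suc k) (\<Union>n. A n) U" using s1 unfolding V3 s2 .
  qed
  then have E: "st (k + 1) (\<Union>n. A n) U = topspace X" by simp
  show "\<exists>A. (\<forall>n. A n \<in> As n) \<and> st (k + 1) (\<Union>n. A n) U = topspace X"
  proof (rule exI[where x=A])
    show "(\<forall>n. A n \<in> As n) \<and> st (k + 1) (\<Union>n. A n) U = topspace X" using A1 E by (rule conjI)
  qed
qed

theorem theorem3:
  shows "(\<forall>X :: 'a topology. Lindelof_space X \<longrightarrow> selectively_star_ccc X) \<and>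
         (\<forall>(k::nat) (X :: 'a topology). k \<ge> 1 \<longrightarrow> k_star_Lindelof k X \<longrightarrow>
            selectively_k_star_ccc (k + 1) X)"
proof (rule conjI)
  show "\<forall>X :: 'a topology. Lindelof_space X \<longrightarrow> selectively_star_ccc X"
  proof (rule allI, rule impI)
    fix X :: "'a topology" assume L: "Lindelof_space X"
    have "selectively_k_star_ccc (0 + 1) X"
    proof (rule main[of X 0])
      fix U assume "open_cover X U"
      then have "(\<forall>U \<in> U. openin X U) \<and> \<Union>U = topspace X" by (simp add: open_cover_def)
      then have "\<exists>V. countable V \<and> V \<subseteq> U \<and> \<Union>V = topspace X"
        using L unfolding Lindelof_space_def by (rule_tac mp[OF spec[where x=U]])
      then obtain V where "countable V" "V \<subseteq> U" "\<Union>V = topspace X"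
        by (elim exE conjE)
      then show "\<exists>V. V \<subseteq> U \<and> countable V \<and> st 0 (\<Union>V) U = topspace X"
        by (intro exI[where x=V]) simp
    qed
    then show "selectively_star_ccc X" by (simp add: selectively_star_ccc_def)
  qed
  show "\<forall>(k::nat) (X :: 'a topology). k \<ge> 1 \<longrightarrow> k_star_Lindelof k X \<longrightarrow>
            selectively_k_star_ccc (k + 1) X"
  proof (intro allI impI)
    fix k :: nat and X :: "'a topology" assume K: "k_star_Lindelof k X"
    show "selectively_k_star_ccc (k + 1) X"
    proof (rule main[of X k])
      fix U assume "open_cover X U"
      then show "\<exists>V. V \<subseteq> U \<and> countable V \<and> st k (\<Union>V) U = topspace X"
        using K unfolding k_star_Lindelof_def by (rule_tac mp[OF spec[where x=U]])
    qed
  qed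
qed

end
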